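(* Let $\mathcal{L}=\{S_1,\dots,S_k\}$ be a finite list of integer compositions (finite words over the alphabet of positive integers) such that no word on the list is contained as a subword (block of consecutive letters) in any other word of the list. Suppose further that all correlation polynomials $c_{ij}(x,q)=c_{S_iS_j}(x,q)$ with $i\neq j$ vanish identically. Let \[F(x,q)=\sum_{\sigma}x^{w(\sigma)}q^{\ell(\sigma)},\] the sum being extended over all compositions $\sigma$ of all nonnegative integers (including the empty composition) that avoid every word of $\mathcal{L}$ as a subword, where $\ell(\sigma)$ is the number of parts of $\sigma$ and $w(\sigma)$ is the sum of the parts of $\sigma$. Then, as formal power series, \[F(x,q)=\frac{1}{1-\frac{qx}{1-x}+\sum_{j=1}^{k}\frac{x^{w(S_j)}q^{\ell(S_j)}}{c_{jj}(x,q)}}.\]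
   Context: A composition is regarded as a word $a_1a_2\cdots a_m$ over the alphabet of positive integers; the weight of a letter $u$ is $w(u)=u$ and the weight $w$ of a word is the sum of the weights of its letters; the length $\ell$ is the number of letters. A word $\sigma$ contains $S$ as a subword if $S$ occurs as a block of consecutive letters of $\sigma$; $\sigma$ avoids $S$ otherwise. Correlation: for words $X=a_0a_1\cdots a_{m-1}$ (of length $m$) and $Y$, and $0\le j\le m-1$, put $c_j=1$ if $Y$ has length at least $m-j$ and the prefix $a_0\cdots a_{m-1-j}$ of $X$ equals the suffix of $Y$ of length $m-j$ (i.e. after aligning right ends and shifting $Y$ $j$ places to the left, the overlapping parts agree), and $c_j=0$ otherwise. The correlation polynomial of $X$ on $Y$ is \[c_{XY}(x,q)=c_0+c_1x^{w(a_{m-1})}q+c_2x^{w(a_{m-2}a_{m-1})}q^2+\dots+c_{m-1}x^{w(a_1a_2\cdots a_{m-1})}q^{m-1},\] i.e. $c_{XY}(x,q)=\sum_{j=0}^{m-1}c_j\,x^{w(a_{m-j}\cdots a_{m-1})}q^{j}$. We write $c_{ij}(x,q)=c_{S_iS_j}(x,q)$. *)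

theory Defs
  imports "HOL-Computational_Algebra.Formal_Power_Series" "HOL-Library.Sublist"
begin

text \<open>Bivariate formal power series in x and q are modelled as power series in x
  whose coefficients are power series in q: type real fps fps.\<close>

definition xv :: "real fps fps" where
  "xv = fps_X"

definition qv :: "real fps fps" where
  "qv = fps_const fps_X"

definition xq :: "nat \<Rightarrow> nat \<Rightarrow> real fps fps" where
  "xq w l = xv ^ w * qv ^ l"

definition is_comp :: "nat list \<Rightarrow> bool" where
  "is_comp \<sigma> \<longleftrightarrow> (\<forall>a\<in>set \<sigma>. 0 < a)"

definition wt :: "nat list \<Rightarrow> nat" where
  "wt \<sigma> = sum_list \<sigma>"

text \<open>Correlation polynomial c_{XY}(x,q) = sum_{j<m} c_j x^{w(a_{m-j} ... a_{m-1})} q^j, where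
  c_j = 1 iff |Y| >= m-j and the prefix of X of length m-j equals the suffix of Y of length m-j.\<close>
definition corr :: "nat list \<Rightarrow> nat list \<Rightarrow> real fps fps" where
  "corr X Y = (\<Sum>j<length X.
      if length X - j \<le> length Y \<and>
         take (length X - j) X = drop (length Y - (length X - j)) Y
      then xq (wt (drop (length X - j) X)) j else 0)"

definition avoids_all :: "(nat \<Rightarrow> nat list) \<Rightarrow> nat \<Rightarrow> nat list \<Rightarrow> bool" where
  "avoids_all S k \<sigma> \<longleftrightarrow> (\<forall>i\<in>{1..k}. \<not> sublist (S i) \<sigma>)"

definition avoid_gf :: "(nat \<Rightarrow> nat list) \<Rightarrow> nat \<Rightarrow> real fps fps" where
  "avoid_gf S k = Abs_fps (\<lambda>n. Abs_fps (\<lambda>m. of_nat (card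
      {\<sigma>. is_comp \<sigma> \<and> wt \<sigma> = n \<and> length \<sigma> = m \<and> avoids_all S k \<sigma>})))"

end

theory Submission
  imports Defs
begin

definition cnt :: "nat list set \<Rightarrow> nat \<Rightarrow> nat \<Rightarrow> nat" where
  "cnt A n m = card {s\<in>A. wt s = n \<and> length s = m}"

definition gf :: "nat list set \<Rightarrow> real fps fps" where
  "gf A = Abs_fps (\<lambda>n. Abs_fps (\<lambda>m. of_nat (cnt A n m)))"

lemma gf_nth: "fps_nth (fps_nth (gf A) n) m = of_nat (cnt A n m)" by (simp add: gf_def)

lemma gf_eqI: "(\<And>n m. cnt A n m = cnt B n m) \<Longrightarrow> gf A = gf B"
  by (simp add: gf_def)

lemma fin_comp: "finite {s. is_comp s \<and> wt s = n}"
proof -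
  have "{s. is_comp s \<and> wt s = n} \<subseteq> {xs. set xs \<subseteq> {0..n} \<and> length xs \<le> n}"
  proof safe
    fix s assume c: "is_comp s" and "n = wt s"
    show "length s \<le> wt s" using c unfolding is_comp_def wt_def
      by (induction s) (auto simp: Suc_le_eq)
    fix x assume "x \<in> set s"
    then show "x \<in> {0..wt s}" unfolding wt_def by (simp add: member_le_sum_list)
  qed
  moreover have "finite {xs. set xs \<subseteq> {0..n} \<and> length xs \<le> n}"
    by (rule finite_lists_length_le) simp
  ultimately show ?thesis by (rule finite_subset)
qed

lemma fin_sub: "A \<subseteq> Collect is_comp \<Longrightarrow> finite {s\<in>A. wt s = n \<and> P s}"
  by (rule finite_subset[OF _ fin_comp[of n]]) auto

lemma xq_nth: "fps_nth (fps_nth (xq w l) n) m = (if n = w \<and> m = l then 1 else 0)"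
proof -
  have "xq w l = fps_X ^ w * fps_const (fps_X ^ l)"
    by (simp add: xq_def xv_def qv_def fps_const_power)
  then show ?thesis by (simp add: fps_X_power_mult_nth)
qed

lemma gf_finite: "finite B \<Longrightarrow> gf B = (\<Sum>b\<in>B. xq (wt b) (length b))"
proof -
  assume f: "finite B"
  show ?thesis
  proof (rule fps_ext, rule fps_ext)
    fix n m
    have "fps_nth (fps_nth (\<Sum>b\<in>B. xq (wt b) (length b)) n) m = (\<Sum>b\<in>B. (if wt b = n \<and> length b = m then 1 else 0 :: real))"
      by (simp add: fps_sum_nth xq_nth eq_commute)
    also have "\<dots> = of_nat (card {b\<in>B. wt b = n \<and> length b = m})"
      using f by (simp add: sum.If_cases Int_def conj_commute)
    finally show "fps_nth (fps_nth (gf B) n) m = fps_nth (fps_nth (\<Sum>b\<in>B. xq (wt b) (length b)) n) m"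
      by (simp add: gf_nth cnt_def)
  qed
qed

lemma inv_ok: fixes f :: "real fps fps" assumes "fps_nth f 0 = 1" shows "f * inverse f = 1"
proof -
  have i: "inverse (fps_nth f 0) = 1" using assms by simp
  have "f * fps_right_inverse f (inverse (fps_nth f 0)) = 1" by (rule fps_right_inverse) (simp add: i assms)
  then show ?thesis unfolding fps_inverse_def .
qed


lemma prod_nth: "fps_nth (fps_nth (f*g::real fps fps) n) m =
   (\<Sum>i=0..n. \<Sum>j=0..m. fps_nth (fps_nth f i) j * fps_nth (fps_nth g (n-i)) (m-j))"
  by (simp add: fps_mult_nth fps_sum_nth)

definition cat :: "nat list set \<Rightarrow> nat list set \<Rightarrow> nat list set" where
  "cat A B = (\<lambda>(a,b). a@b) ` (A\<times>B)"

lemma gf_cat: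
  assumes A: "A \<subseteq> Collect is_comp" and B: "B \<subseteq> Collect is_comp"
    and inj: "inj_on (\<lambda>(a,b). a@b) (A\<times>B)"
  shows "gf (cat A B) = gf A * gf B"
proof (rule fps_ext, rule fps_ext)
  fix n m
  define Aij where "Aij i j = {a\<in>A. wt a = i \<and> length a = j}" for i j
  define Bij where "Bij i j = {b\<in>B. wt b = i \<and> length b = j}" for i j
  define P where "P = {p\<in>A\<times>B. wt (fst p) + wt (snd p) = n \<and> length (fst p) + length (snd p) = m}"
  have finA: "finite (Aij i j)" for i j unfolding Aij_def by (rule fin_sub[OF A])
  have finB: "finite (Bij i j)" for i j unfolding Bij_def by (rule fin_sub[OF B])
  have 1: "{s\<in>cat A B. wt s = n \<and> length s = m} = (\<lambda>(a,b). a@b) ` P"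
    by (auto simp: cat_def P_def wt_def)
  have "inj_on (\<lambda>(a,b). a@b) P" by (rule inj_on_subset[OF inj]) (auto simp: P_def)
  then have 2: "card {s\<in>cat A B. wt s = n \<and> length s = m} = card P"
    unfolding 1 by (rule card_image)
  have 3: "P = (\<Union>i\<in>{0..n}. \<Union>j\<in>{0..m}. Aij i j \<times> Bij (n-i) (m-j))"
    by (auto simp: P_def Aij_def Bij_def)
  have 4: "card (\<Union>j\<in>{0..m}. Aij i j \<times> Bij (n-i) (m-j)) = (\<Sum>j=0..m. card (Aij i j) * card (Bij (n-i) (m-j)))" for i
    by (subst card_UN_disjoint) (auto simp: finA finB card_cartesian_product, auto simp: Aij_def)
  have 5: "card P = (\<Sum>i=0..n. \<Sum>j=0..m. card (Aij i j) * card (Bij (n-i) (m-j)))"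
    unfolding 3 by (subst card_UN_disjoint) (auto simp: finA finB 4, auto simp: Aij_def)
  show "fps_nth (fps_nth (gf (cat A B)) n) m = fps_nth (fps_nth (gf A * gf B) n) m"
    unfolding prod_nth gf_nth cnt_def 2 5
    by (simp add: Aij_def Bij_def)
qed


lemma gf_UN:
  assumes "finite I" and "\<And>i. i \<in> I \<Longrightarrow> B i \<subseteq> Collect is_comp"
    and "\<And>i j. i \<in> I \<Longrightarrow> j \<in> I \<Longrightarrow> i \<noteq> j \<Longrightarrow> B i \<inter> B j = {}"
  shows "gf (\<Union>i\<in>I. B i) = (\<Sum>i\<in>I. gf (B i))"
proof (rule fps_ext, rule fps_ext)
  fix n m
  have e: "{s\<in>(\<Union>i\<in>I. B i). wt s = n \<and> length s = m} = (\<Union>i\<in>I. {s\<in>B i. wt s = n \<and> length s = m})"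
    by blast
  have "card (\<Union>i\<in>I. {s\<in>B i. wt s = n \<and> length s = m}) = (\<Sum>i\<in>I. card {s\<in>B i. wt s = n \<and> length s = m})"
  proof (rule card_UN_disjoint)
    show "finite I" by (rule assms(1))
    show "\<forall>i\<in>I. finite {s\<in>B i. wt s = n \<and> length s = m}"
      using assms(2) by (intro ballI fin_sub) auto
    show "\<forall>i\<in>I. \<forall>j\<in>I. i \<noteq> j \<longrightarrow> {s\<in>B i. wt s = n \<and> length s = m} \<inter> {s\<in>B j. wt s = n \<and> length s = m} = {}"
      using assms(3) by auto
  qed
  then show "fps_nth (fps_nth (gf (\<Union>i\<in>I. B i)) n) m = fps_nth (fps_nth (\<Sum>i\<in>I. gf (B i)) n) m"
    unfolding fps_sum_nth gf_nth cnt_def e by (simp only: of_nat_sum)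
qed

lemma gf_Un:
  assumes "A \<subseteq> Collect is_comp" "B \<subseteq> Collect is_comp" "A \<inter> B = {}"
  shows "gf (A \<union> B) = gf A + gf B"
proof (rule fps_ext, rule fps_ext)
  fix n m
  have e: "{s\<in>A \<union> B. wt s = n \<and> length s = m} = {s\<in>A. wt s = n \<and> length s = m} \<union> {s\<in>B. wt s = n \<and> length s = m}"
    by auto
  have "card ({s\<in>A. wt s = n \<and> length s = m} \<union> {s\<in>B. wt s = n \<and> length s = m}) =
        card {s\<in>A. wt s = n \<and> length s = m} + card {s\<in>B. wt s = n \<and> length s = m}"
    using assms by (intro card_Un_disjoint fin_sub) auto
  then show "fps_nth (fps_nth (gf (A \<union> B)) n) m = fps_nth (fps_nth (gf A + gf B) n) m"
    unfolding fps_add_nth gf_nth cnt_def e by (simp only: of_nat_add)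
qed

lemma gf_single: "gf {s} = xq (wt s) (length s)"
  by (simp add: gf_finite)

lemma xq00: "xq 0 0 = 1" by (simp add: xq_def)

lemma xq_0: "0 < w \<Longrightarrow> fps_nth (xq w l) 0 = 0"
  by (rule fps_ext) (simp add: xq_nth)

lemma wt_pos: "is_comp s \<Longrightarrow> s \<noteq> [] \<Longrightarrow> 0 < wt s"
  by (cases s) (auto simp: is_comp_def wt_def)

lemma gf0: assumes "A \<subseteq> Collect is_comp" "[] \<in> A" shows "fps_nth (gf A) 0 = 1"
proof (rule fps_ext)
  fix m
  have "{s\<in>A. wt s = 0 \<and> length s = m} = (if m = 0 then {[]} else {})"
  proof (cases "m = 0")
    case True
    have "s = []" if "s \<in> A" "wt s = 0" for s
      using wt_pos[of s] that assms(1) by auto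
    then show ?thesis using True assms(2) by (auto simp: wt_def)
  next
    case False
    have "s = []" if "s \<in> A" "wt s = 0" for s
      using wt_pos[of s] that assms(1) by auto
    then show ?thesis using False by auto
  qed
  then show "fps_nth (fps_nth (gf A) 0) m = fps_nth 1 m" by (simp add: gf_nth cnt_def)
qed


lemma cat_iff: "w \<in> cat A B \<longleftrightarrow> (\<exists>a\<in>A. \<exists>b\<in>B. w = a @ b)"
  by (auto simp: cat_def)

definition ind :: "nat list \<Rightarrow> nat list \<Rightarrow> nat \<Rightarrow> bool" where
  "ind X Y t \<longleftrightarrow> length X - t \<le> length Y \<and>
         take (length X - t) X = drop (length Y - (length X - t)) Y"

definition Cw :: "nat list \<Rightarrow> nat list set" where
  "Cw X = (\<lambda>t. drop (length X - t) X) ` {t\<in>{..<length X}. ind X X t}"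

definition Lt :: "nat list set" where
  "Lt = {[a] | a. 0 < a}"

lemma corr_coeff:
  assumes "t < length X"
  shows "fps_nth (fps_nth (corr X Y) (wt (drop (length X - t) X))) t = (if ind X Y t then 1 else 0)"
proof -
  let ?n = "wt (drop (length X - t) X)"
  have "fps_nth (fps_nth (corr X Y) ?n) t =
     (\<Sum>t'<length X. if t' = t then (if ind X Y t then 1 else 0) else 0)"
    unfolding corr_def fps_sum_nth
    by (rule sum.cong) (auto simp: xq_nth ind_def)
  also have "\<dots> = (if ind X Y t then 1 else 0)"
    using assms by (simp add: sum.delta)
  finally show ?thesis .
qed

lemma corr_Cw: "corr X X = gf (Cw X)"
proof -
  have inj: "inj_on (\<lambda>t. drop (length X - t) X) {t\<in>{..<length X}. ind X X t}"
    by (rule inj_onI) (metis (no_types, lifting) diff_diff_cancel length_drop less_imp_le_nat lessThan_iff mem_Collect_eq)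
  have "gf (Cw X) = (\<Sum>b\<in>Cw X. xq (wt b) (length b))"
    by (rule gf_finite) (simp add: Cw_def)
  also have "\<dots> = (\<Sum>t\<in>{t\<in>{..<length X}. ind X X t}. xq (wt (drop (length X - t) X)) (length (drop (length X - t) X)))"
    unfolding Cw_def by (rule sum.reindex[OF inj, unfolded comp_def])
  also have "\<dots> = (\<Sum>t\<in>{t\<in>{..<length X}. ind X X t}. xq (wt (drop (length X - t) X)) t)"
    by (rule sum.cong) auto
  also have "\<dots> = corr X X"
    unfolding corr_def by (subst sum.inter_filter) (auto simp: ind_def)
  finally show ?thesis by simp
qed

lemma Lt_comp: "Lt \<subseteq> Collect is_comp" by (auto simp: Lt_def is_comp_def)

lemma gf_Lt: "gf Lt * (1 - xv) = qv * xv"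
proof (rule fps_ext, rule fps_ext)
  fix n m
  have c: "cnt Lt n m = (if m = 1 \<and> 0 < n then 1 else 0)" for n m
  proof -
    have "{s\<in>Lt. wt s = n \<and> length s = m} = (if m = 1 \<and> 0 < n then {[n]} else {})"
      by (auto simp: Lt_def wt_def)
    then show ?thesis by (simp add: cnt_def)
  qed
  have "gf Lt * (1 - xv) = gf Lt - fps_X * gf Lt" by (simp add: xv_def algebra_simps)
  then show "fps_nth (fps_nth (gf Lt * (1 - xv)) n) m = fps_nth (fps_nth (qv * xv) n) m"
    by (simp add: fps_X_mult_nth gf_nth c qv_def xv_def)
qed

lemma avoids_sub: "avoids_all S k s \<Longrightarrow> sublist t s \<Longrightarrow> avoids_all S k t"
  unfolding avoids_all_def by (meson sublist_order.dual_order.trans)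

lemma comp_sub: "is_comp s \<Longrightarrow> set t \<subseteq> set s \<Longrightarrow> is_comp t"
  unfolding is_comp_def by auto


lemma cat_comp: "A \<subseteq> Collect is_comp \<Longrightarrow> B \<subseteq> Collect is_comp \<Longrightarrow> cat A B \<subseteq> Collect is_comp"
  unfolding cat_def is_comp_def by fastforce

locale ctx =
  fixes S :: "nat \<Rightarrow> nat list" and k :: nat
  assumes words: "\<forall>i\<in>{1..k}. S i \<noteq> [] \<and> is_comp (S i)"
    and reduced: "\<forall>i\<in>{1..k}. \<forall>j\<in>{1..k}. i \<noteq> j \<longrightarrow> \<not> sublist (S i) (S j)"
    and uncorr: "\<forall>i\<in>{1..k}. \<forall>j\<in>{1..k}. i \<noteq> j \<longrightarrow> corr (S i) (S j) = 0"
begin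

definition Av where "Av = {s. is_comp s \<and> avoids_all S k s}"
definition G where "G j = {t. is_comp t \<and> t \<noteq> [] \<and> suffix (S j) t \<and> avoids_all S k (butlast t)}"

lemma Av_comp: "Av \<subseteq> Collect is_comp" by (auto simp: Av_def)
lemma G_comp: "G j \<subseteq> Collect is_comp" by (auto simp: G_def)
lemma Nil_Av: "[] \<in> Av"
proof -
  have "\<not> sublist (S i) []" if "i \<in> {1..k}" for i
    using words[rule_format, OF that] by simp
  then show ?thesis by (simp add: Av_def avoids_all_def is_comp_def)
qed

lemma L_snoc: "avoids_all S k s \<Longrightarrow> \<not> avoids_all S k (s @ [a]) \<Longrightarrow> \<exists>i\<in>{1..k}. suffix (S i) (s @ [a])"
proof -
  assume a1: "avoids_all S k s" and a2: "\<not> avoids_all S k (s @ [a])"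
  then obtain i where i: "i\<in>{1..k}" "sublist (S i) (s @ [a])" unfolding avoids_all_def by blast
  then have "\<not> sublist (S i) s" using a1 unfolding avoids_all_def by blast
  then have "suffix (S i) (s @ [a])" using i(2) by (simp add: sublist_snoc)
  then show ?thesis using i(1) by blast
qed

lemma L_uniq: "i\<in>{1..k} \<Longrightarrow> j\<in>{1..k} \<Longrightarrow> suffix (S i) t \<Longrightarrow> suffix (S j) t \<Longrightarrow> i = j"
proof (rule ccontr)
  assume a: "i\<in>{1..k}" "j\<in>{1..k}" "suffix (S i) t" "suffix (S j) t" "i \<noteq> j"
  have "suffix (S i) (S j) \<or> suffix (S j) (S i)" using a(3,4) by (rule suffix_same_cases)
  then have "sublist (S i) (S j) \<or> sublist (S j) (S i)" by (meson suffix_imp_sublist)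
  moreover have "\<not> sublist (S i) (S j)" by (rule reduced[rule_format, OF a(1) a(2) a(5)])
  moreover have "\<not> sublist (S j) (S i)" by (rule reduced[rule_format, OF a(2) a(1) not_sym[OF a(5)]])
  ultimately show False by blast
qed

lemma L_ind: "i\<in>{1..k} \<Longrightarrow> j\<in>{1..k} \<Longrightarrow> i \<noteq> j \<Longrightarrow> t < length (S j) \<Longrightarrow> \<not> ind (S j) (S i) t"
proof
  assume a: "i\<in>{1..k}" "j\<in>{1..k}" "i \<noteq> j" "t < length (S j)" "ind (S j) (S i) t"
  have z: "corr (S j) (S i) = 0" by (rule uncorr[rule_format, OF a(2) a(1) not_sym[OF a(3)]])
  have "fps_nth (fps_nth (corr (S j) (S i)) (wt (drop (length (S j) - t) (S j)))) t = 1"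
    using corr_coeff[OF a(4), of "S i"] a(5) by simp
  then show False unfolding z by simp
qed

lemma snoc_split: "t \<noteq> [] \<Longrightarrow> t = butlast t @ [last t]" by simp

lemma fact1: "insert [] (cat Av Lt) = Av \<union> (\<Union>j\<in>{1..k}. G j)"
proof
  show "insert [] (cat Av Lt) \<subseteq> Av \<union> (\<Union>j\<in>{1..k}. G j)"
  proof
    fix w assume "w \<in> insert [] (cat Av Lt)"
    then consider "w = []" | s a where "s \<in> Av" "0 < a" "w = s @ [a]"
      by (auto simp: cat_iff Lt_def)
    then show "w \<in> Av \<union> (\<Union>j\<in>{1..k}. G j)"
    proof cases
      case 1 then show ?thesis using Nil_Av by simp
    next
      case 2
      have c: "is_comp w" using 2 by (auto simp: Av_def is_comp_def)
      show ?thesis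
      proof (cases "avoids_all S k w")
        case True then show ?thesis using c by (simp add: Av_def)
      next
        case False
        then obtain i where "i\<in>{1..k}" "suffix (S i) w" using L_snoc[of s a] 2 by (auto simp: Av_def)
        then have "w \<in> G i" using 2 c by (auto simp: G_def Av_def)
        then show ?thesis using \<open>i\<in>{1..k}\<close> by blast
      qed
    qed
  qed
next
  show "Av \<union> (\<Union>j\<in>{1..k}. G j) \<subseteq> insert [] (cat Av Lt)"
  proof
    fix w assume w: "w \<in> Av \<union> (\<Union>j\<in>{1..k}. G j)"
    show "w \<in> insert [] (cat Av Lt)"
    proof (cases "w = []")
      case True then show ?thesis by simp
    next
      case False
      have sb: "sublist (butlast w) w" by (rule prefix_imp_sublist[OF prefixeq_butlast])
      have c: "is_comp w" and av: "avoids_all S k (butlast w)"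
        using w
      proof (safe)
        assume "w \<in> Av" then show "is_comp w" "avoids_all S k (butlast w)"
          using avoids_sub[OF _ sb] by (auto simp: Av_def)
      next
        fix j assume "w \<in> G j" then show "is_comp w" "avoids_all S k (butlast w)"
          by (auto simp: G_def)
      qed
      have "butlast w \<in> Av" using c av by (auto simp: Av_def is_comp_def dest: in_set_butlastD)
      moreover have "[last w] \<in> Lt" using c False by (auto simp: Lt_def is_comp_def)
      ultimately show ?thesis using snoc_split[OF False] by (auto simp: cat_iff)
    qed
  qed
qed

lemma gf_fact1: "1 + gf Av * gf Lt = gf Av + (\<Sum>j=1..k. gf (G j))"
proof -
  have nn: "[] \<notin> cat Av Lt" by (auto simp: cat_iff Lt_def)
  have cc: "cat Av Lt \<subseteq> Collect is_comp" by (rule cat_comp[OF Av_comp Lt_comp])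
  have inj: "inj_on (\<lambda>(a,b). a@b) (Av \<times> Lt)"
    by (rule inj_onI) (auto simp: Lt_def)
  have "gf (insert [] (cat Av Lt)) = gf {[]} + gf (cat Av Lt)"
    unfolding insert_is_Un[of "[]" "cat Av Lt"] using nn cc by (intro gf_Un) (auto simp: is_comp_def)
  also have "\<dots> = 1 + gf Av * gf Lt"
    by (simp add: gf_single xq00 wt_def gf_cat[OF Av_comp Lt_comp inj])
  finally have 1: "gf (insert [] (cat Av Lt)) = 1 + gf Av * gf Lt" .
  have d1: "Av \<inter> (\<Union>j\<in>{1..k}. G j) = {}"
    by (auto simp: Av_def G_def avoids_all_def dest: suffix_imp_sublist)
  have d2: "G i \<inter> G j = {}" if "i\<in>{1..k}" "j\<in>{1..k}" "i \<noteq> j" for i j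
    using L_uniq[OF that(1,2)] that(3) by (auto simp: G_def)
  have "gf (Av \<union> (\<Union>j\<in>{1..k}. G j)) = gf Av + gf (\<Union>j\<in>{1..k}. G j)"
    using d1 Av_comp G_comp by (intro gf_Un) auto
  also have "gf (\<Union>j\<in>{1..k}. G j) = (\<Sum>j=1..k. gf (G j))"
    using d2 G_comp by (intro gf_UN) auto
  finally show ?thesis using 1 fact1 by simp
qed

lemma fact2a:
  assumes j: "j\<in>{1..k}"
  shows "cat Av {S j} \<subseteq> cat (G j) (Cw (S j))"
proof
  fix w assume "w \<in> cat Av {S j}"
  then obtain \<sigma> where \<sigma>: "\<sigma> \<in> Av" and w: "w = \<sigma> @ S j" by (auto simp: cat_iff)
  have Sj: "S j \<noteq> []" "is_comp (S j)" using words[rule_format, OF j] by auto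
  have av\<sigma>: "avoids_all S k \<sigma>" "is_comp \<sigma>" using \<sigma> by (auto simp: Av_def)
  have cw: "is_comp w" using av\<sigma>(2) Sj(2) unfolding w is_comp_def by auto
  define m where "m = length (S j)"
  define P where "P p \<longleftrightarrow> \<not> avoids_all S k (take p w)" for p
  have Pw: "P (length w)"
  proof -
    have "sublist (S j) w" using w by simp
    then show ?thesis using j by (auto simp: P_def avoids_all_def)
  qed
  define p where "p = (LEAST p. P p)"
  have Pp: "P p" unfolding p_def by (rule LeastI[of P, OF Pw])
  have minp: "\<not> P q" if "q < p" for q using not_less_Least[of q P] that unfolding p_def by blast
  have ple: "p \<le> length w" unfolding p_def by (rule Least_le[of P, OF Pw])
  have gt: "length \<sigma> < p"
  proof (rule ccontr)
    assume "\<not> length \<sigma> < p"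
    then have "take p w = take p \<sigma>" using w by simp
    moreover have "sublist (take p \<sigma>) \<sigma>" by (rule prefix_imp_sublist[OF take_is_prefix])
    ultimately have "avoids_all S k (take p w)" using avoids_sub[OF av\<sigma>(1)] by simp
    then show False using Pp by (simp add: P_def)
  qed
  define r where "r = p - length \<sigma>"
  have r1: "1 \<le> r" and rm: "r \<le> m" using gt ple w by (auto simp: r_def m_def)
  have tp: "take p w = \<sigma> @ take r (S j)" using w gt by (simp add: r_def)
  have p0: "0 < p" using gt by simp
  have bl: "butlast (take p w) = take (p-1) w" using ple by (simp add: butlast_take)
  have avbl: "avoids_all S k (take (p-1) w)" using minp[of "p-1"] p0 by (simp add: P_def)
  have ne: "take p w \<noteq> []" using tp Sj r1 by simp
  have eq: "take p w = take (p-1) w @ [last (take p w)]" using snoc_split[OF ne] bl by metis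
  have "\<not> avoids_all S k (take (p-1) w @ [last (take p w)])" using Pp eq unfolding P_def by metis
  then obtain i where i: "i\<in>{1..k}" "suffix (S i) (take (p-1) w @ [last (take p w)])"
    using L_snoc[OF avbl] by blast
  have si: "suffix (S i) (\<sigma> @ take r (S j))" using i(2) eq tp by metis
  have lt: "length (take r (S j)) = r" using rm m_def by simp
  have key: "i = j \<and> take r (S j) = drop (m - r) (S j)"
  proof (cases "length (S i) \<le> r")
    case True
    have "suffix (S i) (take r (S j))"
    proof -
      from si consider "suffix (S i) (take r (S j))" | xs' where "S i = xs' @ take r (S j)"
        by (auto simp: suffix_append)
      then show ?thesis
      proof cases
        case 2 then have "xs' = []" using True lt by simp
        then show ?thesis using 2 by simp
      qed simp
    qed
    then have "sublist (S i) (S j)"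
      by (meson prefix_imp_sublist suffix_imp_sublist sublist_order.order.trans take_is_prefix)
    then have ij: "i = j" using reduced[rule_format, OF i(1) j] by blast
    then have "r = m" using True rm m_def by simp
    then show ?thesis using ij by (simp add: m_def)
  next
    case False
    have "\<not> suffix (S i) (take r (S j))" using False suffix_length_le lt by fastforce
    then obtain xs' where xs': "S i = xs' @ take r (S j)" using si by (auto simp: suffix_append)
    have dd: "drop (length (S i) - r) (S i) = take r (S j)" using xs' lt by simp
    have ind: "ind (S j) (S i) (m - r)" unfolding ind_def using dd False rm r1 by (simp add: m_def)
    have ij: "i = j"
    proof (rule ccontr)
      assume ne: "i \<noteq> j"
      have "m - r < length (S j)" using r1 rm by (simp add: m_def)
      then show False using L_ind[OF i(1) j ne] ind by blast
    qed
    then show ?thesis using dd by (simp add: m_def)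
  qed
  have inG: "take p w \<in> G j"
  proof -
    have "is_comp (take p w)" using cw by (rule comp_sub) (simp add: set_take_subset)
    moreover have "suffix (S j) (take p w)" using key i(2) eq by metis
    ultimately show ?thesis using ne bl avbl by (simp add: G_def)
  qed
  have inC: "drop r (S j) \<in> Cw (S j)"
  proof -
    have "ind (S j) (S j) (m - r)" unfolding ind_def using key rm by (simp add: m_def)
    moreover have "m - r < m" using r1 rm by simp
    moreover have "drop r (S j) = drop (length (S j) - (m - r)) (S j)" using rm by (simp add: m_def)
    ultimately show ?thesis unfolding Cw_def m_def by blast
  qed
  have "w = take p w @ drop r (S j)" using tp w by simp
  then show "w \<in> cat (G j) (Cw (S j))" using inG inC by (auto simp: cat_iff)
qed

lemma fact2b:
  assumes j: "j\<in>{1..k}"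
  shows "cat (G j) (Cw (S j)) \<subseteq> cat Av {S j}"
proof
  fix w assume "w \<in> cat (G j) (Cw (S j))"
  then obtain \<tau> u where \<tau>: "\<tau> \<in> G j" and u: "u \<in> Cw (S j)" and w: "w = \<tau> @ u" by (auto simp: cat_iff)
  define m where "m = length (S j)"
  from u obtain t where t: "t < m" "ind (S j) (S j) t" "u = drop (m - t) (S j)"
    by (auto simp: Cw_def m_def)
  from \<tau> obtain \<rho> where \<rho>: "\<tau> = \<rho> @ S j" by (auto simp: G_def suffix_def)
  define r where "r = m - t"
  have r1: "1 \<le> r" using t(1) by (simp add: r_def)
  have ii: "take r (S j) = drop t (S j)" using t(1,2) by (simp add: ind_def r_def m_def)
  have Ssp: "S j = take t (S j) @ take r (S j)" using ii by simp
  define \<sigma> where "\<sigma> = \<rho> @ take t (S j)"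
  have \<tau>2: "\<tau> = \<sigma> @ take r (S j)" using \<rho> Ssp \<sigma>_def by (metis append.assoc)
  have w2: "w = \<sigma> @ S j"
  proof -
    have "w = \<sigma> @ take r (S j) @ drop r (S j)" using w \<tau>2 t(3) by (simp add: r_def)
    then show ?thesis by simp
  qed
  have "S j \<noteq> []" using t(1) m_def by auto
  then have ne: "take r (S j) \<noteq> []" using r1 by simp
  have pre: "prefix \<sigma> (butlast \<tau>)" using \<tau>2 ne by (simp add: butlast_append)
  have avt: "avoids_all S k (butlast \<tau>)" and ct: "is_comp \<tau>" using \<tau> by (simp_all add: G_def)
  have "avoids_all S k \<sigma>" by (rule avoids_sub[OF avt prefix_imp_sublist[OF pre]])
  moreover have "set \<sigma> \<subseteq> set \<tau>" using \<tau>2 by auto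
  then have "is_comp \<sigma>" by (rule comp_sub[OF ct])
  ultimately have "\<sigma> \<in> Av" by (simp add: Av_def)
  then show "w \<in> cat Av {S j}" using w2 by (auto simp: cat_iff)
qed

lemma noshort:
  assumes j: "j\<in>{1..k}" and t: "t \<in> G j" "t' \<in> G j" and e: "t @ u = t' @ u'" and l: "length t' < length t"
  shows False
proof -
  have p1: "prefix t' (t @ u)" using e by simp
  have p2: "prefix t (t @ u)" by simp
  have pt: "prefix t' t" using prefix_length_prefix[OF p1 p2] l by simp
  have tne: "t \<noteq> []" using t by (simp add: G_def)
  have "prefix t' (butlast t @ [last t])" using pt snoc_split[OF tne] by metis
  then have "t' = butlast t @ [last t] \<or> prefix t' (butlast t)" by (simp only: prefix_snoc)
  moreover have "t' \<noteq> butlast t @ [last t]"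
  proof
    assume "t' = butlast t @ [last t]"
    then have "t' = t" using snoc_split[OF tne] by metis
    then show False using l by simp
  qed
  ultimately have "prefix t' (butlast t)" by blast
  moreover have "suffix (S j) t'" using t by (simp add: G_def)
  ultimately have "sublist (S j) (butlast t)"
    by (meson prefix_imp_sublist suffix_imp_sublist sublist_order.order.trans)
  moreover have "avoids_all S k (butlast t)" using t by (simp add: G_def)
  ultimately show False using j unfolding avoids_all_def by blast
qed

lemma inj2:
  assumes j: "j\<in>{1..k}"
  shows "inj_on (\<lambda>(a,b). a@b) (G j \<times> Cw (S j))"
proof (rule inj_onI, clarify)
  fix t u t' u' assume a: "t \<in> G j" "u \<in> Cw (S j)" "t' \<in> G j" "u' \<in> Cw (S j)" "t @ u = t' @ u'"
  have "length t = length t'"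
    using noshort[OF j a(1) a(3) a(5)] noshort[OF j a(3) a(1) a(5)[symmetric]] by (meson linorder_neqE_nat)
  then show "t = t' \<and> u = u'" using a(5) by simp
qed

lemma gf_fact2:
  assumes j: "j\<in>{1..k}"
  shows "gf Av * xq (wt (S j)) (length (S j)) = gf (G j) * corr (S j) (S j)"
proof -
  have Sj: "is_comp (S j)" using words[rule_format, OF j] by auto
  have c1: "{S j} \<subseteq> Collect is_comp" using Sj by simp
  have c2: "Cw (S j) \<subseteq> Collect is_comp"
  proof
    fix x assume "x \<in> Cw (S j)"
    then obtain n where "x = drop n (S j)" by (auto simp: Cw_def)
    then show "x \<in> Collect is_comp" using comp_sub[OF Sj] by (simp add: set_drop_subset)
  qed
  have inj1: "inj_on (\<lambda>(a,b). a@b) (Av \<times> {S j})" by (rule inj_onI) auto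
  have "gf Av * xq (wt (S j)) (length (S j)) = gf (cat Av {S j})"
    using gf_cat[OF Av_comp c1 inj1] by (simp add: gf_single)
  also have "cat Av {S j} = cat (G j) (Cw (S j))" using fact2a[OF j] fact2b[OF j] by blast
  also have "gf \<dots> = gf (G j) * corr (S j) (S j)"
    using gf_cat[OF G_comp c2 inj2[OF j]] by (simp add: corr_Cw)
  finally show ?thesis .
qed

lemma F_eq: "avoid_gf S k = gf Av"
proof -
  have "{s\<in>Av. wt s = n \<and> length s = m} = {\<sigma>. is_comp \<sigma> \<and> wt \<sigma> = n \<and> length \<sigma> = m \<and> avoids_all S k \<sigma>}" for n m
    by (auto simp: Av_def)
  then show ?thesis by (simp add: avoid_gf_def gf_def cnt_def)
qed

lemma corr0: assumes j: "j\<in>{1..k}" shows "fps_nth (corr (S j) (S j)) 0 = 1"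
proof -
  have Sj: "S j \<noteq> []" "is_comp (S j)" using words[rule_format, OF j] by auto
  have c2: "Cw (S j) \<subseteq> Collect is_comp"
  proof
    fix x assume "x \<in> Cw (S j)"
    then obtain n where "x = drop n (S j)" by (auto simp: Cw_def)
    then show "x \<in> Collect is_comp" using comp_sub[OF Sj(2)] by (simp add: set_drop_subset)
  qed
  have "[] \<in> Cw (S j)"
  proof -
    have "0 \<in> {t\<in>{..<length (S j)}. ind (S j) (S j) t}" using Sj(1) by (simp add: ind_def)
    then have "drop (length (S j) - 0) (S j) \<in> Cw (S j)" unfolding Cw_def by (rule imageI)
    then show ?thesis by simp
  qed
  then show ?thesis unfolding corr_Cw using gf0[OF c2] by simp
qed

lemma main:
  "avoid_gf S k =
    inverse (1 - qv * xv * inverse (1 - xv)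
               + (\<Sum>j=1..k. xq (wt (S j)) (length (S j)) * inverse (corr (S j) (S j))))"
proof -
  define F where "F = gf Av"
  define D where "D = 1 - qv * xv * inverse (1 - xv)
               + (\<Sum>j=1..k. xq (wt (S j)) (length (S j)) * inverse (corr (S j) (S j)))"
  have x0: "fps_nth xv 0 = 0" by (simp add: xv_def)
  have i1: "(1 - xv) * inverse (1 - xv) = 1" by (rule inv_ok) (simp add: x0)
  have A: "gf Lt = qv * xv * inverse (1 - xv)"
  proof -
    have "gf Lt = gf Lt * ((1 - xv) * inverse (1 - xv))" using i1 by simp
    also have "\<dots> = (gf Lt * (1 - xv)) * inverse (1 - xv)" by (simp add: mult.assoc)
    finally show ?thesis using gf_Lt by simp
  qed
  have ic: "corr (S j) (S j) * inverse (corr (S j) (S j)) = 1" if "j\<in>{1..k}" for j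
    by (rule inv_ok[OF corr0[OF that]])
  have Gj: "gf (G j) = F * xq (wt (S j)) (length (S j)) * inverse (corr (S j) (S j))" if j: "j\<in>{1..k}" for j
  proof -
    have "gf (G j) = gf (G j) * (corr (S j) (S j) * inverse (corr (S j) (S j)))" using ic[OF j] by simp
    also have "\<dots> = (gf (G j) * corr (S j) (S j)) * inverse (corr (S j) (S j))" by (simp add: mult.assoc)
    also have "\<dots> = F * xq (wt (S j)) (length (S j)) * inverse (corr (S j) (S j))"
      using gf_fact2[OF j] by (simp add: F_def)
    finally show ?thesis .
  qed
  have FD: "F * D = 1"
  proof -
    have "F * D = F - F * gf Lt + (\<Sum>j=1..k. F * xq (wt (S j)) (length (S j)) * inverse (corr (S j) (S j)))"
      unfolding D_def A by (simp add: algebra_simps sum_distrib_left)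
    also have "(\<Sum>j=1..k. F * xq (wt (S j)) (length (S j)) * inverse (corr (S j) (S j))) = (\<Sum>j=1..k. gf (G j))"
      by (rule sum.cong) (simp_all add: Gj)
    finally have h1: "F * D = F - F * gf Lt + (\<Sum>j=1..k. gf (G j))" .
    have h2: "1 + F * gf Lt = F + (\<Sum>j=1..k. gf (G j))" using gf_fact1 unfolding F_def .
    then have h3: "(\<Sum>j=1..k. gf (G j)) = 1 + F * gf Lt - F" by (metis add_diff_cancel_left')
    show ?thesis unfolding h1 h3 by (simp add: algebra_simps)
  qed
  have D0: "fps_nth D 0 = 1"
  proof -
    have z: "fps_nth (xq (wt (S j)) (length (S j)) * inverse (corr (S j) (S j))) 0 = 0" if j: "j\<in>{1..k}" for j
    proof -
      have "0 < wt (S j)" using words[rule_format, OF j] wt_pos by auto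
      then show ?thesis by (simp add: fps_mult_nth_0 xq_0)
    qed
    have "fps_nth (\<Sum>j=1..k. xq (wt (S j)) (length (S j)) * inverse (corr (S j) (S j))) 0 = 0"
      unfolding fps_sum_nth by (rule sum.neutral) (use z in blast)
    then show ?thesis unfolding D_def by (simp add: fps_mult_nth_0 x0)
  qed
  have "F = F * (D * inverse D)" using inv_ok[OF D0] by simp
  also have "\<dots> = inverse D" using FD by (simp add: mult.assoc[symmetric])
  finally show ?thesis unfolding F_eq F_def D_def .
qed

end

theorem theorem2:
  fixes S :: "nat \<Rightarrow> nat list" and k :: nat
  assumes words: "\<forall>i\<in>{1..k}. S i \<noteq> [] \<and> is_comp (S i)"
    and reduced: "\<forall>i\<in>{1..k}. \<forall>j\<in>{1..k}. i \<noteq> j \<longrightarrow> \<not> sublist (S i) (S j)"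
    and uncorr: "\<forall>i\<in>{1..k}. \<forall>j\<in>{1..k}. i \<noteq> j \<longrightarrow> corr (S i) (S j) = 0"
  shows "avoid_gf S k =
    inverse (1 - qv * xv * inverse (1 - xv)
               + (\<Sum>j=1..k. xq (wt (S j)) (length (S j)) * inverse (corr (S j) (S j))))"
proof -
  interpret ctx S k using words reduced uncorr by unfold_locales
  show ?thesis by (rule main)
qed

end
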